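(* Let $U\subseteq(\Sigma\Gamma)^*$ be a regular $(\Sigma\Gamma)^*$-prefix closed set and $T=U\Sigma^*\Gamma^*$. Then $\mathit{maxsync}(T,T)$ is regular.
   Context: $\Sigma,\Gamma$ are disjoint finite alphabets. A set $U\subseteq(\Sigma\Gamma)^*$ is $(\Sigma\Gamma)^*$-prefix closed if $uab\in U$ implies $u\in U$ for all $u\in(\Sigma\Gamma)^*$, $a\in\Sigma$, $b\in\Gamma$. For $w\in(\Sigma\cup\Gamma)^*$, $\llbracket w\rrbracket=(\pi_{\mathtt i}(w),\pi_{\mathtt o}(w))$ where $\pi_{\mathtt i}$ (resp. $\pi_{\mathtt o}$) deletes all letters of $\Gamma$ (resp. $\Sigma$). A shift of $w$ is a position $i\in\{1,\dots,|w|-1\}$ with exactly one of $w[i],w[i+1]$ in $\Sigma$, $\mathit{shift}(w)$ is the number of shifts, and $\mathrm{Reg}_{\mathsf{FS}}$ is the class of regular languages $L$ with $\sup_{w\in L}\mathit{shift}(w)<\infty$. For $x\in(\Sigma\cup\Gamma)^*$, $x^{-1}T=\{z:xz\in T\}$, and $w[1,i]$ is the prefix of $w$ of length $i$. For $w,w'\in T$ with $\llbracket w\rrbracket=\llbracket w'\rrbracket$, write $w\preceq_T w'$ if for all $i\le|w|$, $(w'[1,i])^{-1}T\in\mathrm{Reg}_{\mathsf{FS}}$ implies $(w[1,i])^{-1}T\in\mathrm{Reg}_{\mathsf{FS}}$. $\mathit{maxsync}(T,T)=\{w\in T:\ w'\preceq_T w\text{ for all }w'\in T\text{ with }\llbracket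 w'\rrbracket=\llbracket w\rrbracket\}$. *)

theory Defs
  imports Main
begin

definition lconc :: "'a list set \<Rightarrow> 'a list set \<Rightarrow> 'a list set" where
  "lconc A B = {u @ v | u v. u \<in> A \<and> v \<in> B}"

inductive_set lstar :: "'a list set \<Rightarrow> 'a list set" for A :: "'a list set" where
  lstar_Nil: "[] \<in> lstar A"
| lstar_app: "u \<in> A \<Longrightarrow> v \<in> lstar A \<Longrightarrow> u @ v \<in> lstar A"

inductive regular :: "'a list set \<Rightarrow> bool" where
  reg_empty: "regular {}"
| reg_eps: "regular {[]}"
| reg_letter: "regular {[a]}"
| reg_union: "regular A \<Longrightarrow> regular B \<Longrightarrow> regular (A \<union> B)"
| reg_conc: "regular A \<Longrightarrow> regular B \<Longrightarrow> regular (lconc A B)"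
| reg_star: "regular A \<Longrightarrow> regular (lstar A)"

definition SG_words :: "'a set \<Rightarrow> 'a set \<Rightarrow> 'a list set" where
  "SG_words \<Sigma> \<Gamma> = lstar {[a, b] | a b. a \<in> \<Sigma> \<and> b \<in> \<Gamma>}"

definition SG_prefix_closed :: "'a set \<Rightarrow> 'a set \<Rightarrow> 'a list set \<Rightarrow> bool" where
  "SG_prefix_closed \<Sigma> \<Gamma> U \<longleftrightarrow>
     (\<forall>u a b. u \<in> SG_words \<Sigma> \<Gamma> \<and> a \<in> \<Sigma> \<and> b \<in> \<Gamma> \<and> u @ [a, b] \<in> U \<longrightarrow> u \<in> U)"

definition proj_i :: "'a set \<Rightarrow> 'a list \<Rightarrow> 'a list" where
  "proj_i \<Gamma> w = filter (\<lambda>x. x \<notin> \<Gamma>) w"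

definition proj_o :: "'a set \<Rightarrow> 'a list \<Rightarrow> 'a list" where
  "proj_o \<Sigma> w = filter (\<lambda>x. x \<notin> \<Sigma>) w"

definition sem :: "'a set \<Rightarrow> 'a set \<Rightarrow> 'a list \<Rightarrow> 'a list \<times> 'a list" where
  "sem \<Sigma> \<Gamma> w = (proj_i \<Gamma> w, proj_o \<Sigma> w)"

text \<open>Number of shifts (positions are 0-indexed here: i and i+1 with i+1 < |w|).\<close>
definition shift :: "'a set \<Rightarrow> 'a list \<Rightarrow> nat" where
  "shift \<Sigma> w = card {i. Suc i < length w \<and> ((w ! i \<in> \<Sigma>) \<noteq> (w ! Suc i \<in> \<Sigma>))}"

definition RegFS :: "'a set \<Rightarrow> 'a list set \<Rightarrow> bool" where
  "RegFS \<Sigma> L \<longleftrightarrow> regular L \<and> (\<exists>B::nat. \<forall>w\<in>L. shift \<Sigma> w \<le> B)"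

definition lquot :: "'a list \<Rightarrow> 'a list set \<Rightarrow> 'a list set" where
  "lquot x T = {z. x @ z \<in> T}"

definition sync_le :: "'a set \<Rightarrow> 'a set \<Rightarrow> 'a list set \<Rightarrow> 'a list \<Rightarrow> 'a list \<Rightarrow> bool" where
  "sync_le \<Sigma> \<Gamma> T w w' \<longleftrightarrow> w \<in> T \<and> w' \<in> T \<and> sem \<Sigma> \<Gamma> w = sem \<Sigma> \<Gamma> w' \<and>
     (\<forall>i \<le> length w. RegFS \<Sigma> (lquot (take i w') T) \<longrightarrow> RegFS \<Sigma> (lquot (take i w) T))"

definition maxsync :: "'a set \<Rightarrow> 'a set \<Rightarrow> 'a list set \<Rightarrow> 'a list set" where
  "maxsync \<Sigma> \<Gamma> T = {w \<in> T. \<forall>w' \<in> T. sem \<Sigma> \<Gamma> w' = sem \<Sigma> \<Gamma> w \<longrightarrow> sync_le \<Sigma> \<Gamma> T w' w}"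

end

theory Submission
  imports Defs
begin

lemma lquot_Nil[simp]: "lquot [] L = L" by (simp add: lquot_def)
lemma lquot_append: "lquot (x @ y) L = lquot y (lquot x L)" by (simp add: lquot_def)
lemma lquot_mem[simp]: "z \<in> lquot x L \<longleftrightarrow> x @ z \<in> L" by (simp add: lquot_def)

lemma lstar_append: "a \<in> lstar A \<Longrightarrow> b \<in> lstar A \<Longrightarrow> a @ b \<in> lstar A"
  by (induction a rule: lstar.induct) (auto intro: lstar.intros)

lemma lquot_union: "lquot x (A \<union> B) = lquot x A \<union> lquot x B" by (auto simp: lquot_def)

lemma lquot_conc: "lquot x (lconc A B) =
   lconc (lquot x A) B \<union> \<Union> {lquot (drop k x) B | k. k \<le> length x \<and> take k x \<in> A}"
proof (intro equalityI subsetI)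
  fix z assume "z \<in> lquot x (lconc A B)"
  then obtain u v where uv: "x @ z = u @ v" "u \<in> A" "v \<in> B" by (auto simp: lconc_def)
  then obtain us where "(x = u @ us \<and> us @ z = v) \<or> (x @ us = u \<and> z = us @ v)"
    by (auto simp: append_eq_append_conv2)
  then show "z \<in> lconc (lquot x A) B \<union> \<Union> {lquot (drop k x) B | k. k \<le> length x \<and> take k x \<in> A}"
  proof
    assume h: "x = u @ us \<and> us @ z = v"
    then have "z \<in> lquot (drop (length u) x) B" "length u \<le> length x" "take (length u) x \<in> A"
      using uv by auto
    then show ?thesis by blast
  next
    assume h: "x @ us = u \<and> z = us @ v"
    then show ?thesis using uv by (auto simp: lconc_def)
  qed
next
  fix z assume "z \<in> lconc (lquot x A) B \<union> \<Union> {lquot (drop k x) B | k. k \<le> length x \<and> take k x \<in> A}"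
  then show "z \<in> lquot x (lconc A B)"
  proof
    assume "z \<in> lconc (lquot x A) B"
    then obtain u v where "z = u @ v" "x @ u \<in> A" "v \<in> B" by (auto simp: lconc_def)
    then have "x @ z = (x @ u) @ v" by simp
    then show ?thesis using \<open>x @ u \<in> A\<close> \<open>v \<in> B\<close> unfolding lconc_def lquot_mem by blast
  next
    assume "z \<in> \<Union> {lquot (drop k x) B | k. k \<le> length x \<and> take k x \<in> A}"
    then obtain k where "k \<le> length x" "take k x \<in> A" "drop k x @ z \<in> B" by auto
    then show ?thesis unfolding lconc_def lquot_mem
      by (intro CollectI exI[of _ "take k x"] exI[of _ "drop k x @ z"]) simp
  qed
qed

lemma lstar_split:
  assumes "w \<in> lstar A"
  shows "w = x @ z \<Longrightarrow> x \<noteq> [] \<Longrightarrow> \<exists>x1 y z1 z2. x = x1 @ y \<and> y \<noteq> [] \<and> x1 \<in> lstar A \<and>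
            y @ z1 \<in> A \<and> z = z1 @ z2 \<and> z2 \<in> lstar A"
  using assms
proof (induction arbitrary: x z rule: lstar.induct)
  case lstar_Nil
  then show ?case by simp
next
  case (lstar_app u v)
  from lstar_app.prems(1) obtain us where
    "(x = u @ us \<and> us @ z = v) \<or> (x @ us = u \<and> z = us @ v)"
    by (auto simp: append_eq_append_conv2)
  then show ?case
  proof
    assume h: "x = u @ us \<and> us @ z = v"
    show ?thesis
    proof (cases "us = []")
      case True
      then show ?thesis using h lstar_app by (intro exI[of _ "[]"] exI[of _ u] exI[of _ "[]"] exI[of _ z])
          (auto intro: lstar.intros)
    next
      case False
      from lstar_app.IH[of us z] h False obtain x1 y z1 z2 where
        "us = x1 @ y \<and> y \<noteq> [] \<and> x1 \<in> lstar A \<and> y @ z1 \<in> A \<and> z = z1 @ z2 \<and> z2 \<in> lstar A" by auto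
      then show ?thesis using h lstar_app
        by (intro exI[of _ "u @ x1"] exI[of _ y] exI[of _ z1] exI[of _ z2]) (auto intro: lstar.intros)
    qed
  next
    assume h: "x @ us = u \<and> z = us @ v"
    then show ?thesis using lstar_app
      by (intro exI[of _ "[]"] exI[of _ x] exI[of _ us] exI[of _ v]) (auto intro: lstar.intros)
  qed
qed

definition starq :: "'a list \<Rightarrow> 'a list set \<Rightarrow> 'a list set set" where
  "starq x A = {lquot y A | y. \<exists>x1. x = x1 @ y \<and> y \<noteq> [] \<and> x1 \<in> lstar A}"

lemma lquot_star: "x \<noteq> [] \<Longrightarrow> lquot x (lstar A) = lconc (\<Union> (starq x A)) (lstar A)"
proof (intro equalityI subsetI)
  fix z assume xz: "x \<noteq> []" "z \<in> lquot x (lstar A)"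
  then have "x @ z \<in> lstar A" by simp
  from lstar_split[OF this refl xz(1)] obtain x1 y z1 z2 where h: "x = x1 @ y" "y \<noteq> []" "x1 \<in> lstar A"
            "y @ z1 \<in> A" "z = z1 @ z2" "z2 \<in> lstar A" by blast
  have "lquot y A \<in> starq x A" unfolding starq_def using h(1-3) by blast
  moreover have "z1 \<in> lquot y A" using h(4) by simp
  ultimately have "z1 \<in> \<Union> (starq x A)" by blast
  then show "z \<in> lconc (\<Union> (starq x A)) (lstar A)"
    unfolding lconc_def using h(5,6) by blast
next
  fix z assume "z \<in> lconc (\<Union> (starq x A)) (lstar A)"
  then obtain z1 z2 where h0: "z = z1 @ z2" "z1 \<in> \<Union> (starq x A)" "z2 \<in> lstar A"
    unfolding lconc_def by blast
  then obtain y x1 where h: "y @ z1 \<in> A" "x = x1 @ y" "x1 \<in> lstar A"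
    unfolding starq_def by auto
  have "(y @ z1) @ z2 \<in> lstar A" using lstar_app[OF h(1) h0(3)] .
  then have "x1 @ (y @ z1) @ z2 \<in> lstar A" using h lstar_append by blast
  then show "z \<in> lquot x (lstar A)" using h h0 by simp
qed

definition quots :: "'a list set \<Rightarrow> 'a list set set" where
  "quots L = range (\<lambda>x. lquot x L)"

lemma finite_quots: "regular L \<Longrightarrow> finite (quots L)"
proof (induction rule: regular.induct)
  case reg_empty
  have "quots {} \<subseteq> {{}}" by (auto simp: quots_def lquot_def)
  then show ?case by (rule finite_subset) simp
next
  case reg_eps
  have "quots {[]} \<subseteq> {{[]}, {}}" by (auto simp: quots_def lquot_def)
  then show ?case by (rule finite_subset) simp
next
  case (reg_letter a)
  have "quots {[a]} \<subseteq> {{[a]}, {[]}, {}}"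
  proof
    fix q assume "q \<in> quots {[a]}"
    then obtain x where "q = lquot x {[a]}" by (auto simp: quots_def)
    then show "q \<in> {{[a]}, {[]}, {}}"
      by (cases x) (auto simp: lquot_def Cons_eq_append_conv)
  qed
  then show ?case by (rule finite_subset) simp
next
  case (reg_union A B)
  have "quots (A \<union> B) \<subseteq> (\<lambda>(p, q). p \<union> q) ` (quots A \<times> quots B)"
    by (auto simp: quots_def lquot_union)
  then show ?case by (rule finite_subset) (use reg_union in auto)
next
  case (reg_conc A B)
  have "quots (lconc A B) \<subseteq> (\<lambda>(P, S). lconc P B \<union> \<Union> S) ` (quots A \<times> Pow (quots B))"
  proof
    fix q assume "q \<in> quots (lconc A B)"
    then obtain x where "q = lquot x (lconc A B)" by (auto simp: quots_def)
    then show "q \<in> (\<lambda>(P, S). lconc P B \<union> \<Union> S) ` (quots A \<times> Pow (quots B))"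
      unfolding lquot_conc
      by (intro image_eqI[of _ _ "(lquot x A, {lquot (drop k x) B | k. k \<le> length x \<and> take k x \<in> A})"])
         (auto simp: quots_def)
  qed
  then show ?case by (rule finite_subset) (use reg_conc in auto)
next
  case (reg_star A)
  have "quots (lstar A) \<subseteq> insert (lstar A) ((\<lambda>S. lconc (\<Union> S) (lstar A)) ` Pow (quots A))"
  proof
    fix q assume "q \<in> quots (lstar A)"
    then obtain x where q: "q = lquot x (lstar A)" by (auto simp: quots_def)
    show "q \<in> insert (lstar A) ((\<lambda>S. lconc (\<Union> S) (lstar A)) ` Pow (quots A))"
    proof (cases "x = []")
      case True then show ?thesis using q by simp
    next
      case False
      then show ?thesis unfolding q lquot_star[OF False]
        by (intro insertI2 image_eqI[of _ _ "starq x A"]) (auto simp: quots_def starq_def)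
    qed
  qed
  then show ?case by (rule finite_subset) (use reg_star in auto)
qed


lemma regular_singleton: "regular {w}"
proof (induction w)
  case Nil then show ?case by (rule reg_eps)
next
  case (Cons a w)
  have "{a # w} = lconc {[a]} {w}" by (auto simp: lconc_def)
  then show ?case using reg_conc[OF reg_letter Cons] by simp
qed

lemma regular_finite: "finite F \<Longrightarrow> regular F"
proof (induction rule: finite_induct)
  case empty then show ?case by (rule reg_empty)
next
  case (insert w F)
  have "insert w F = {w} \<union> F" by simp
  then show ?case using reg_union[OF regular_singleton insert(3)] by simp
qed

lemma regular_UN: "finite I \<Longrightarrow> (\<And>i. i \<in> I \<Longrightarrow> regular (f i)) \<Longrightarrow> regular (\<Union>i\<in>I. f i)"
proof (induction rule: finite_induct)
  case empty then show ?case by (simp add: reg_empty)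
next
  case (insert j I)
  have "(\<Union>i\<in>insert j I. f i) = f j \<union> (\<Union>i\<in>I. f i)" by simp
  then show ?case using reg_union[of "f j" "\<Union>i\<in>I. f i"] insert by simp
qed

definition R :: "'a set \<Rightarrow> 'a list set set \<Rightarrow> 'a list set \<Rightarrow> 'a list set \<Rightarrow> 'a list set" where
  "R A S p q = {x \<in> lists A. lquot x p = q \<and> (\<forall>i. 0 < i \<and> i < length x \<longrightarrow> lquot (take i x) p \<in> S)}"

lemma R_empty: "finite A \<Longrightarrow> regular (R A {} p q)"
proof -
  assume A: "finite A"
  have "R A {} p q \<subseteq> {xs. set xs \<subseteq> A \<and> length xs \<le> 1}"
  proof
    fix x assume x: "x \<in> R A {} p q"
    have "length x \<le> 1"
    proof (rule ccontr)
      assume "\<not> length x \<le> 1"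
      then show False using x by (auto simp: R_def dest: spec[of _ 1])
    qed
    then show "x \<in> {xs. set xs \<subseteq> A \<and> length xs \<le> 1}" using x by (auto simp: R_def)
  qed
  moreover have "finite {xs. set xs \<subseteq> A \<and> length xs \<le> 1}" using finite_lists_length_le[OF A] .
  ultimately show ?thesis by (intro regular_finite) (rule finite_subset)
qed

lemma R_D:
  assumes "x \<in> R A S p q"
  shows "x \<in> lists A" "lquot x p = q" "\<And>i. 0 < i \<Longrightarrow> i < length x \<Longrightarrow> lquot (take i x) p \<in> S"
  using assms unfolding R_def by auto

lemma R_I:
  assumes "x \<in> lists A" "lquot x p = q" "\<And>i. 0 < i \<Longrightarrow> i < length x \<Longrightarrow> lquot (take i x) p \<in> S"
  shows "x \<in> R A S p q"
  using assms unfolding R_def by auto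

lemma R_concat:
  assumes x: "x \<in> R A S p r" and y: "y \<in> R A S r q" and r: "r \<in> S"
  shows "x @ y \<in> R A S p q"
proof (rule R_I)
  show "x @ y \<in> lists A" using R_D(1)[OF x] R_D(1)[OF y] by simp
  show "lquot (x @ y) p = q" using R_D(2)[OF x] R_D(2)[OF y] by (simp add: lquot_append)
  fix i assume i: "0 < i" "i < length (x @ y)"
  consider "i < length x" | "i = length x" | "length x < i" by linarith
  then show "lquot (take i (x @ y)) p \<in> S"
  proof cases
    case 1 then show ?thesis using R_D(3)[OF x i(1)] by simp
  next
    case 2 then show ?thesis using R_D(2)[OF x] r by simp
  next
    case 3
    then have "take i (x @ y) = x @ take (i - length x) y" by simp
    then have "lquot (take i (x @ y)) p = lquot (take (i - length x) y) r"
      using R_D(2)[OF x] by (simp add: lquot_append)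
    moreover have "0 < i - length x" "i - length x < length y" using 3 i by auto
    ultimately show ?thesis using R_D(3)[OF y] by simp
  qed
qed

lemma R_mono: "S \<subseteq> S' \<Longrightarrow> R A S p q \<subseteq> R A S' p q"
  by (auto simp: R_def)

lemma R_Nil: "[] \<in> R A S p p" by (simp add: R_def)

lemma star_R: "xs \<in> lstar (R A S s s) \<Longrightarrow> xs \<in> R A (insert s S) s s"
proof (induction rule: lstar.induct)
  case lstar_Nil then show ?case by (rule R_Nil)
next
  case (lstar_app u v)
  have "u \<in> R A (insert s S) s s" using lstar_app(1) R_mono[of S "insert s S"] by blast
  then show ?case using R_concat lstar_app(3) by blast
qed

lemma R_take:
  assumes x: "x \<in> R A S' p q" and i: "i \<le> length x" and m: "\<And>j. 0 < j \<Longrightarrow> j < i \<Longrightarrow> lquot (take j x) p \<in> S"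
  shows "take i x \<in> R A S p (lquot (take i x) p)"
  unfolding R_def
proof (intro CollectI conjI allI impI refl)
  show "take i x \<in> lists A" using x unfolding R_def by (auto dest: in_set_takeD)
  fix j assume j: "0 < j \<and> j < length (take i x)"
  then have "j < i" by simp
  then have "take j (take i x) = take j x" by simp
  then show "lquot (take j (take i x)) p \<in> S" using m j \<open>j < i\<close> by simp
qed

lemma R_drop:
  assumes x: "x \<in> R A S p q" and i: "i \<le> length x"
  shows "drop i x \<in> R A S (lquot (take i x) p) q"
proof (rule R_I)
  show "drop i x \<in> lists A" using R_D(1)[OF x] by (auto dest: in_set_dropD)
  have "lquot (drop i x) (lquot (take i x) p) = lquot (take i x @ drop i x) p"
    by (simp only: lquot_append)
  then show "lquot (drop i x) (lquot (take i x) p) = q" using R_D(2)[OF x] by simp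
  fix j assume j: "0 < j" "j < length (drop i x)"
  have "take i x @ take j (drop i x) = take (i + j) x" by (simp add: take_add)
  then have "lquot (take j (drop i x)) (lquot (take i x) p) = lquot (take (i + j) x) p"
    by (metis lquot_append)
  moreover have "0 < i + j" "i + j < length x" using j by auto
  ultimately show "lquot (take j (drop i x)) (lquot (take i x) p) \<in> S"
    using R_D(3)[OF x] by simp
qed

lemma R_first_split:
  assumes x: "x \<in> R A (insert s S) p q"
    and ex: "\<exists>j. 0 < j \<and> j < length x \<and> lquot (take j x) p \<notin> S"
  shows "\<exists>i. 0 < i \<and> i < length x \<and> take i x \<in> R A S p s \<and> drop i x \<in> R A (insert s S) s q"
proof -
  define i where "i = (LEAST j. 0 < j \<and> j < length x \<and> lquot (take j x) p \<notin> S)"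
  have i: "0 < i \<and> i < length x \<and> lquot (take i x) p \<notin> S"
    unfolding i_def using LeastI_ex[OF ex] .
  have min: "\<And>j. 0 < j \<Longrightarrow> j < i \<Longrightarrow> lquot (take j x) p \<in> S"
  proof (rule ccontr)
    fix j assume "0 < j" "j < i" "lquot (take j x) p \<notin> S"
    then have "0 < j \<and> j < length x \<and> lquot (take j x) p \<notin> S" using i by simp
    then have "i \<le> j" unfolding i_def by (rule Least_le)
    then show False using \<open>j < i\<close> by simp
  qed
  have s: "lquot (take i x) p = s" using i x by (auto simp: R_def)
  have "take i x \<in> R A S p s" using R_take[OF x _ min] i s by auto
  moreover have "drop i x \<in> R A (insert s S) s q" using R_drop[OF x, of i] i s by auto
  ultimately show ?thesis using i by blast
qed

lemma R_star_part:
  "y \<in> R A (insert s S) s q \<Longrightarrow> y \<in> lconc (lstar (R A S s s)) (R A S s q)"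
proof (induction "length y" arbitrary: y rule: less_induct)
  case less
  show ?case
  proof (cases "\<exists>j. 0 < j \<and> j < length y \<and> lquot (take j y) s \<notin> S")
    case False
    then have "y \<in> R A S s q" using less.prems by (auto simp: R_def)
    moreover have "y = [] @ y" by simp
    ultimately show ?thesis unfolding lconc_def using lstar_Nil by blast
  next
    case True
    from R_first_split[OF less.prems True] obtain i where
      i: "0 < i" "i < length y" "take i y \<in> R A S s s" "drop i y \<in> R A (insert s S) s q" by blast
    have "drop i y \<in> lconc (lstar (R A S s s)) (R A S s q)"
      using less.hyps[of "drop i y"] i by auto
    then obtain a b where ab: "drop i y = a @ b" "a \<in> lstar (R A S s s)" "b \<in> R A S s q"
      unfolding lconc_def by blast
    have "take i y @ a \<in> lstar (R A S s s)" using lstar_app[OF i(3) ab(2)] .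
    moreover have "y = (take i y @ a) @ b" using ab(1)
      by (metis append_assoc append_take_drop_id)
    ultimately show ?thesis unfolding lconc_def using ab(3) by blast
  qed
qed

lemma R_insert: "R A (insert s S) p q =
   R A S p q \<union> lconc (R A S p s) (lconc (lstar (R A S s s)) (R A S s q))"
proof (intro equalityI subsetI)
  fix x assume x: "x \<in> R A (insert s S) p q"
  show "x \<in> R A S p q \<union> lconc (R A S p s) (lconc (lstar (R A S s s)) (R A S s q))"
  proof (cases "\<exists>j. 0 < j \<and> j < length x \<and> lquot (take j x) p \<notin> S")
    case False
    then have "x \<in> R A S p q" using x by (auto simp: R_def)
    then show ?thesis by blast
  next
    case True
    from R_first_split[OF x True] obtain i where
      i: "take i x \<in> R A S p s" "drop i x \<in> R A (insert s S) s q" by blast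
    have "drop i x \<in> lconc (lstar (R A S s s)) (R A S s q)" using R_star_part[OF i(2)] .
    moreover have "x = take i x @ drop i x" by simp
    ultimately have "x \<in> lconc (R A S p s) (lconc (lstar (R A S s s)) (R A S s q))"
      unfolding lconc_def using i(1) by blast
    then show ?thesis by blast
  qed
next
  fix x assume "x \<in> R A S p q \<union> lconc (R A S p s) (lconc (lstar (R A S s s)) (R A S s q))"
  then show "x \<in> R A (insert s S) p q"
  proof
    assume "x \<in> R A S p q" then show ?thesis using R_mono[of S "insert s S"] by blast
  next
    assume "x \<in> lconc (R A S p s) (lconc (lstar (R A S s s)) (R A S s q))"
    then obtain x1 xs x2 where h: "x = x1 @ xs @ x2" "x1 \<in> R A S p s" "xs \<in> lstar (R A S s s)"
      "x2 \<in> R A S s q" unfolding lconc_def by blast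
    have s: "s \<in> insert s S" by simp
    have "x1 \<in> R A (insert s S) p s" "x2 \<in> R A (insert s S) s q"
      using h R_mono[of S "insert s S"] by blast+
    moreover have "xs \<in> R A (insert s S) s s" using star_R[OF h(3)] .
    ultimately show ?thesis using h(1) R_concat[OF _ _ s] by metis
  qed
qed

lemma R_regular: assumes A: "finite A" shows "finite S \<Longrightarrow> regular (R A S p q)"
proof (induction S arbitrary: p q rule: finite_induct)
  case empty then show ?case using R_empty[OF A] by blast
next
  case (insert s S)
  then show ?case unfolding R_insert
    by (intro reg_union reg_conc reg_star) auto
qed

lemma regular_quots:
  assumes A: "finite A" and L: "L \<subseteq> lists A" and Q: "finite (quots L)"
  shows "regular L"
proof -
  have "L = (\<Union>q\<in>{q \<in> quots L. [] \<in> q}. R A (quots L) L q)"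
  proof (intro equalityI subsetI)
    fix x assume "x \<in> L"
    then show "x \<in> (\<Union>q\<in>{q \<in> quots L. [] \<in> q}. R A (quots L) L q)"
      using L by (auto simp: R_def quots_def intro!: bexI[of _ "lquot x L"])
  next
    fix x assume "x \<in> (\<Union>q\<in>{q \<in> quots L. [] \<in> q}. R A (quots L) L q)"
    then show "x \<in> L" by (auto simp: R_def)
  qed
  moreover have "regular (\<Union>q\<in>{q \<in> quots L. [] \<in> q}. R A (quots L) L q)"
    using Q by (intro regular_UN R_regular A) auto
  ultimately show ?thesis by simp
qed


lemma regular_diff:
  assumes "finite A" "L1 \<subseteq> lists A" "regular L1" "regular L2"
  shows "regular (L1 - L2)"
proof (rule regular_quots[OF assms(1)])
  show "L1 - L2 \<subseteq> lists A" using assms(2) by blast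
  have "quots (L1 - L2) \<subseteq> (\<lambda>(a, b). a - b) ` (quots L1 \<times> quots L2)"
  proof
    fix q assume "q \<in> quots (L1 - L2)"
    then obtain x where "q = lquot x (L1 - L2)" by (auto simp: quots_def)
    then have "q = (\<lambda>(a, b). a - b) (lquot x L1, lquot x L2)" by (auto simp: lquot_def)
    then show "q \<in> (\<lambda>(a, b). a - b) ` (quots L1 \<times> quots L2)"
      by (intro image_eqI) (auto simp: quots_def)
  qed
  then show "finite (quots (L1 - L2))"
    by (rule finite_subset) (use finite_quots[OF assms(3)] finite_quots[OF assms(4)] in auto)
qed

lemma regular_by_quot:
  assumes "finite A" "L' \<subseteq> lists A" "regular L" "\<And>y. lquot y L' = F (lquot y L)"
  shows "regular L'"
proof (rule regular_quots[OF assms(1,2)])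
  have "quots L' \<subseteq> F ` quots L"
    by (auto simp: quots_def assms(4))
  then show "finite (quots L')"
    by (rule finite_subset) (use finite_quots[OF assms(3)] in auto)
qed

lemma regular_lquot:
  assumes "finite A" "L \<subseteq> lists A" "regular L"
  shows "regular (lquot x L)"
proof (rule regular_quots[OF assms(1)])
  show "lquot x L \<subseteq> lists A" using assms(2) by (auto simp: lquot_def)
  have "quots (lquot x L) \<subseteq> quots L"
    by (auto simp: quots_def simp flip: lquot_append)
  then show "finite (quots (lquot x L))"
    by (rule finite_subset) (use finite_quots[OF assms(3)] in auto)
qed

lemma regular_lists:
  assumes "finite A"
  shows "regular (lists A)"
proof (rule regular_quots[OF assms])
  have "quots (lists A) \<subseteq> {lists A, {}}"
    by (auto simp: quots_def lquot_def)
  then show "finite (quots (lists A))" by (rule finite_subset) simp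
qed simp


definition alt :: "'a set \<Rightarrow> 'a set \<Rightarrow> 'a list \<Rightarrow> bool" where
  "alt P Q x \<longleftrightarrow> (\<forall>i<length x. x ! i \<in> (if even i then P else Q))"

lemma alt_Nil[simp]: "alt P Q []" by (simp add: alt_def)

lemma alt_Cons[simp]: "alt P Q (a # x) \<longleftrightarrow> a \<in> P \<and> alt Q P x"
proof
  assume h: "alt P Q (a # x)"
  have "a \<in> P" using h[unfolded alt_def, rule_format, of 0] by simp
  moreover have "alt Q P x" unfolding alt_def
  proof (intro allI impI)
    fix i assume "i < length x"
    then show "x ! i \<in> (if even i then Q else P)"
      using h[unfolded alt_def, rule_format, of "Suc i"] by (auto split: if_splits)
  qed
  ultimately show "a \<in> P \<and> alt Q P x" by simp
next
  assume h: "a \<in> P \<and> alt Q P x"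
  show "alt P Q (a # x)" unfolding alt_def
  proof (intro allI impI)
    fix i assume i: "i < length (a # x)"
    show "(a # x) ! i \<in> (if even i then P else Q)"
    proof (cases i)
      case 0 then show ?thesis using h by simp
    next
      case (Suc j)
      then show ?thesis using h i by (auto simp: alt_def)
    qed
  qed
qed

lemma alt_append: "alt P Q (x @ y) \<longleftrightarrow> alt P Q x \<and> (if even (length x) then alt P Q y else alt Q P y)"
  by (induction x arbitrary: P Q) auto

lemma alt_take: "alt P Q x \<Longrightarrow> alt P Q (take i x)"
  using alt_append[of P Q "take i x" "drop i x"] by simp

lemma alt_lists: "alt P Q x \<Longrightarrow> x \<in> lists (P \<union> Q)"
  by (induction x arbitrary: P Q) auto

lemma SG_alt1: "x \<in> lstar {[a, b] |a b. a \<in> \<Sigma> \<and> b \<in> \<Gamma>} \<Longrightarrow> alt \<Sigma> \<Gamma> x \<and> even (length x)"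
proof (induction rule: lstar.induct)
  case lstar_Nil then show ?case by simp
next
  case (lstar_app u v)
  from lstar_app.hyps(1) obtain a b where "u = [a, b]" "a \<in> \<Sigma>" "b \<in> \<Gamma>" by blast
  then show ?case using lstar_app.IH by simp
qed

lemma SG_alt2: "alt \<Sigma> \<Gamma> x \<and> even (length x) \<Longrightarrow> x \<in> lstar {[a, b] |a b. a \<in> \<Sigma> \<and> b \<in> \<Gamma>}"
proof (induction x rule: induct_list012)
  case 1 show ?case by (rule lstar_Nil)
next
  case (2 x) then show ?case by simp
next
  case (3 x y zs)
  then have zs: "zs \<in> lstar {[a, b] |a b. a \<in> \<Sigma> \<and> b \<in> \<Gamma>}" by simp
  have "[x, y] \<in> {[a, b] |a b. a \<in> \<Sigma> \<and> b \<in> \<Gamma>}" using "3.prems" by simp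
  from lstar_app[OF this zs] show ?case by simp
qed

lemma SG_alt: "x \<in> SG_words \<Sigma> \<Gamma> \<longleftrightarrow> alt \<Sigma> \<Gamma> x \<and> even (length x)"
  unfolding SG_words_def using SG_alt1 SG_alt2 by blast

lemma alt_len:
  assumes "alt P Q x" "P \<inter> Q = {}"
  shows "length (filter (\<lambda>c. c \<notin> Q) x) = (length x + 1) div 2 \<and>
         length (filter (\<lambda>c. c \<notin> P) x) = length x div 2"
  using assms
proof (induction x arbitrary: P Q)
  case Nil then show ?case by simp
next
  case (Cons a x)
  then have "a \<in> P" "a \<notin> Q" "alt Q P x" by auto
  with Cons.IH[of Q P] Cons.prems(2) show ?case by auto
qed

lemma alt_eq:
  assumes "alt P Q x" "alt P Q y" "P \<inter> Q = {}"
    "filter (\<lambda>c. c \<notin> Q) x = filter (\<lambda>c. c \<notin> Q) y" "filter (\<lambda>c. c \<notin> P) x = filter (\<lambda>c. c \<notin> P) y"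
  shows "x = y"
  using assms
proof (induction x arbitrary: y P Q)
  case Nil
  show ?case
  proof (cases y)
    case Nil then show ?thesis by simp
  next
    case (Cons b y1)
    then have "b \<in> P" "b \<notin> Q" using Nil by auto
    then show ?thesis using Nil Cons by simp
  qed
next
  case (Cons a x1)
  then have a: "a \<in> P" "a \<notin> Q" "alt Q P x1" by auto
  show ?case
  proof (cases y)
    case Nil then show ?thesis using Cons.prems a by simp
  next
    case (Cons b y1)
    then have b: "b \<in> P" "b \<notin> Q" "alt Q P y1" using Cons.prems by auto
    have "a = b" "filter (\<lambda>c. c \<notin> Q) x1 = filter (\<lambda>c. c \<notin> Q) y1"
      using Cons.prems(4) a b Cons by auto
    moreover have "filter (\<lambda>c. c \<notin> P) x1 = filter (\<lambda>c. c \<notin> P) y1"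
      using Cons.prems(5) a b Cons by auto
    ultimately show ?thesis using Cons.IH[of Q P y1] a b Cons.prems(3) Cons by auto
  qed
qed

definition pre :: "'a list \<Rightarrow> 'a list \<Rightarrow> bool" where
  "pre p a \<longleftrightarrow> (\<exists>r. a = p @ r)"

lemma pre_filter_take: "pre (filter P (take i w)) (filter P w)"
  unfolding pre_def by (metis append_take_drop_id filter_append)

lemma pre_trans: "pre a b \<Longrightarrow> pre b c \<Longrightarrow> pre a c"
  unfolding pre_def by auto

lemma pre_eq: "pre p1 a \<Longrightarrow> pre p2 a \<Longrightarrow> length p1 = length p2 \<Longrightarrow> p1 = p2"
  unfolding pre_def by (metis append_eq_append_conv)

lemma pre_len: "pre p a \<Longrightarrow> length p \<le> length a"
  unfolding pre_def by auto

lemma pre_app: "pre (a @ b) (a @ c) \<longleftrightarrow> pre b c"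
  unfolding pre_def by auto

lemma pre_Cons: "pre [x] (x # c)"
  unfolding pre_def by auto

lemma alt_eq_pre:
  assumes "alt P Q x" "alt P Q y" "P \<inter> Q = {}" "length x = length y"
    "pre (filter (\<lambda>c. c \<notin> Q) x) al" "pre (filter (\<lambda>c. c \<notin> Q) y) al"
    "pre (filter (\<lambda>c. c \<notin> P) x) be" "pre (filter (\<lambda>c. c \<notin> P) y) be"
  shows "x = y"
proof (rule alt_eq[OF assms(1-3)])
  show "filter (\<lambda>c. c \<notin> Q) x = filter (\<lambda>c. c \<notin> Q) y"
    using pre_eq[OF assms(5,6)] alt_len[OF assms(1,3)] alt_len[OF assms(2,3)] assms(4) by simp
  show "filter (\<lambda>c. c \<notin> P) x = filter (\<lambda>c. c \<notin> P) y"
    using pre_eq[OF assms(7,8)] alt_len[OF assms(1,3)] alt_len[OF assms(2,3)] assms(4) by simp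
qed

definition SP :: "'a set \<Rightarrow> 'a list \<Rightarrow> nat set" where
  "SP \<Sigma> w = {i. Suc i < length w \<and> ((w ! i \<in> \<Sigma>) \<noteq> (w ! Suc i \<in> \<Sigma>))}"

lemma shift_SP: "shift \<Sigma> w = card (SP \<Sigma> w)" by (simp add: shift_def SP_def)

lemma SP_finite: "finite (SP \<Sigma> w)"
  by (rule finite_subset[of _ "{..<length w}"]) (auto simp: SP_def)

lemma shift_app: "shift \<Sigma> (p @ q) \<le> length p + shift \<Sigma> q"
proof -
  have "SP \<Sigma> (p @ q) \<subseteq> {..<length p} \<union> (\<lambda>j. j + length p) ` SP \<Sigma> q"
  proof
    fix i assume i: "i \<in> SP \<Sigma> (p @ q)"
    show "i \<in> {..<length p} \<union> (\<lambda>j. j + length p) ` SP \<Sigma> q"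
    proof (cases "i < length p")
      case True then show ?thesis by simp
    next
      case False
      then have "i - length p \<in> SP \<Sigma> q" using i
        by (auto simp: SP_def nth_append Suc_diff_le)
      then show ?thesis using False by (intro UnI2 image_eqI[of _ _ "i - length p"]) auto
    qed
  qed
  then have "card (SP \<Sigma> (p @ q)) \<le> card ({..<length p} \<union> (\<lambda>j. j + length p) ` SP \<Sigma> q)"
    by (intro card_mono) (auto intro: SP_finite)
  also have "\<dots> \<le> card {..<length p} + card ((\<lambda>j. j + length p) ` SP \<Sigma> q)"
    by (rule card_Un_le)
  also have "\<dots> \<le> length p + card (SP \<Sigma> q)"
    using card_image_le[OF SP_finite, of "\<lambda>j. j + length p" \<Sigma> q] by simp
  finally show ?thesis by (simp add: shift_SP)
qed

lemma shift_drop: "shift \<Sigma> (drop k w) \<le> shift \<Sigma> w"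
proof -
  have "(\<lambda>j. j + k) ` SP \<Sigma> (drop k w) \<subseteq> SP \<Sigma> w"
    by (auto simp: SP_def add.commute)
  then have "card ((\<lambda>j. j + k) ` SP \<Sigma> (drop k w)) \<le> card (SP \<Sigma> w)"
    by (intro card_mono SP_finite)
  moreover have "card ((\<lambda>j. j + k) ` SP \<Sigma> (drop k w)) = card (SP \<Sigma> (drop k w))"
    by (intro card_image) (auto simp: inj_on_def)
  ultimately show ?thesis by (simp add: shift_SP)
qed

lemma shift_sg:
  assumes "\<Sigma> \<inter> \<Gamma> = {}" "s \<in> lists \<Sigma>" "g \<in> lists \<Gamma>"
  shows "shift \<Sigma> (s @ g) \<le> 1"
proof -
  have "SP \<Sigma> (s @ g) \<subseteq> {length s - 1}"
  proof
    fix i assume i: "i \<in> SP \<Sigma> (s @ g)"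
    have "\<not> Suc i < length s"
    proof
      assume "Suc i < length s"
      then have "s ! i \<in> \<Sigma>" "s ! Suc i \<in> \<Sigma>" using assms(2) by auto
      then show False using i \<open>Suc i < length s\<close> by (auto simp: SP_def nth_append)
    qed
    moreover have "i < length s"
    proof (rule ccontr)
      assume "\<not> i < length s"
      then have "g ! (i - length s) \<in> \<Gamma>" "g ! (Suc i - length s) \<in> \<Gamma>"
        using assms(3) i by (auto simp: SP_def)
      then have "g ! (i - length s) \<notin> \<Sigma>" "g ! (Suc i - length s) \<notin> \<Sigma>" using assms(1) by auto
      then show False using i \<open>\<not> i < length s\<close> by (auto simp: SP_def nth_append)
    qed
    ultimately show "i \<in> {length s - 1}" by simp
  qed
  then have "card (SP \<Sigma> (s @ g)) \<le> card {length s - 1}" by (intro card_mono) auto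
  then show ?thesis by (simp add: shift_SP)
qed

lemma shift_alt:
  assumes "alt P Q z" "P \<inter> Q = {}" "P = \<Sigma> \<or> Q = \<Sigma>"
  shows "shift \<Sigma> z = length z - 1"
proof -
  have "SP \<Sigma> z = {..<length z - 1}"
  proof (intro equalityI subsetI)
    fix i assume "i \<in> SP \<Sigma> z" then show "i \<in> {..<length z - 1}" by (auto simp: SP_def)
  next
    fix i assume i: "i \<in> {..<length z - 1}"
    then have "Suc i < length z" by auto
    then have "z ! i \<in> (if even i then P else Q)" "z ! Suc i \<in> (if even (Suc i) then P else Q)"
      using assms(1) unfolding alt_def by auto
    then show "i \<in> SP \<Sigma> z" using i assms(2,3) by (auto simp: SP_def split: if_splits)
  qed
  then show ?thesis by (simp add: shift_SP)
qed


lemma lconc_I: "u \<in> A \<Longrightarrow> v \<in> B \<Longrightarrow> u @ v \<in> lconc A B"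
  unfolding lconc_def by blast

lemma finite_lquot: "finite F \<Longrightarrow> finite (lquot y F)"
proof -
  assume "finite F"
  moreover have "lquot y F \<subseteq> drop (length y) ` F"
  proof
    fix z assume "z \<in> lquot y F"
    then have "y @ z \<in> F" by simp
    moreover have "z = drop (length y) (y @ z)" by simp
    ultimately show "z \<in> drop (length y) ` F" by blast
  qed
  ultimately show ?thesis using finite_surj by blast
qed

lemma filt_S: "s \<in> lists \<Sigma> \<Longrightarrow> \<Sigma> \<inter> \<Gamma> = {} \<Longrightarrow> filter (\<lambda>x. x \<notin> \<Gamma>) s = s \<and> filter (\<lambda>x. x \<notin> \<Sigma>) s = []"
  by (induction s) auto

lemma filt_G: "g \<in> lists \<Gamma> \<Longrightarrow> \<Sigma> \<inter> \<Gamma> = {} \<Longrightarrow> filter (\<lambda>x. x \<notin> \<Gamma>) g = [] \<and> filter (\<lambda>x. x \<notin> \<Sigma>) g = g"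
  by (induction g) auto

lemma len_proj: "w \<in> lists (\<Sigma> \<union> \<Gamma>) \<Longrightarrow> \<Sigma> \<inter> \<Gamma> = {} \<Longrightarrow>
   length w = length (proj_i \<Gamma> w) + length (proj_o \<Sigma> w)"
  by (induction w) (auto simp: proj_i_def proj_o_def)

definition G :: "'a list set \<Rightarrow> 'a \<Rightarrow> 'a \<Rightarrow> 'a list set" where
  "G U a b = {u \<in> U. infinite (lquot (u @ [a, b]) U)}"

definition BAD :: "'a set \<Rightarrow> 'a set \<Rightarrow> 'a list set \<Rightarrow> 'a list set" where
  "BAD \<Sigma> \<Gamma> U = (\<Union>p\<in>\<Sigma> \<times> \<Gamma>. \<Union>c\<in>\<Sigma>. lconc (G U (fst p) (snd p))
      (lconc {[fst p]} (lconc {[c]} (lconc (lists \<Sigma>) (lconc {[snd p]} (lists \<Gamma>))))))"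

lemma BAD_mem: "w \<in> BAD \<Sigma> \<Gamma> U \<longleftrightarrow> (\<exists>u a b c s g. w = u @ a # c # s @ b # g \<and> u \<in> U \<and> a \<in> \<Sigma> \<and> b \<in> \<Gamma>
    \<and> c \<in> \<Sigma> \<and> s \<in> lists \<Sigma> \<and> g \<in> lists \<Gamma> \<and> infinite (lquot (u @ [a, b]) U))"
proof
  assume "w \<in> BAD \<Sigma> \<Gamma> U"
  then obtain p c where p: "p \<in> \<Sigma> \<times> \<Gamma>" "c \<in> \<Sigma>" and
    wm: "w \<in> lconc (G U (fst p) (snd p)) (lconc {[fst p]} (lconc {[c]} (lconc (lists \<Sigma>) (lconc {[snd p]} (lists \<Gamma>)))))"
    unfolding BAD_def by blast
  obtain a b where ab: "p = (a, b)" by (cases p)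
  have abc: "a \<in> \<Sigma>" "b \<in> \<Gamma>" "c \<in> \<Sigma>"
    "w \<in> lconc (G U a b) (lconc {[a]} (lconc {[c]} (lconc (lists \<Sigma>) (lconc {[b]} (lists \<Gamma>)))))"
    using p wm ab by auto
  from abc(4) obtain u s g where "w = u @ [a] @ [c] @ s @ [b] @ g" "u \<in> G U a b" "s \<in> lists \<Sigma>" "g \<in> lists \<Gamma>"
    unfolding lconc_def by blast
  then show "\<exists>u a b c s g. w = u @ a # c # s @ b # g \<and> u \<in> U \<and> a \<in> \<Sigma> \<and> b \<in> \<Gamma>
    \<and> c \<in> \<Sigma> \<and> s \<in> lists \<Sigma> \<and> g \<in> lists \<Gamma> \<and> infinite (lquot (u @ [a, b]) U)"
    using abc by (intro exI[of _ u] exI[of _ a] exI[of _ b] exI[of _ c] exI[of _ s] exI[of _ g])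
      (simp add: G_def)
next
  assume "\<exists>u a b c s g. w = u @ a # c # s @ b # g \<and> u \<in> U \<and> a \<in> \<Sigma> \<and> b \<in> \<Gamma>
    \<and> c \<in> \<Sigma> \<and> s \<in> lists \<Sigma> \<and> g \<in> lists \<Gamma> \<and> infinite (lquot (u @ [a, b]) U)"
  then obtain u a b c s g where h: "w = u @ a # c # s @ b # g" "u \<in> U" "a \<in> \<Sigma>" "b \<in> \<Gamma>"
    "c \<in> \<Sigma>" "s \<in> lists \<Sigma>" "g \<in> lists \<Gamma>" "infinite (lquot (u @ [a, b]) U)" by blast
  have "u @ [a] @ [c] @ s @ [b] @ g \<in> lconc (G U a b) (lconc {[a]} (lconc {[c]} (lconc (lists \<Sigma>) (lconc {[b]} (lists \<Gamma>)))))"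
    using h by (intro lconc_I) (auto simp: G_def)
  then have "w \<in> lconc (G U (fst (a, b)) (snd (a, b))) (lconc {[fst (a, b)]} (lconc {[c]} (lconc (lists \<Sigma>) (lconc {[snd (a, b)]} (lists \<Gamma>)))))"
    using h(1) by simp
  then show "w \<in> BAD \<Sigma> \<Gamma> U" unfolding BAD_def using h(3,4,5) by blast
qed

locale setting =
  fixes \<Sigma> \<Gamma> :: "'a set" and U :: "'a list set"
  assumes fS: "finite \<Sigma>" and fG: "finite \<Gamma>" and disj: "\<Sigma> \<inter> \<Gamma> = {}"
    and USG: "U \<subseteq> SG_words \<Sigma> \<Gamma>"
    and regU: "regular U"
    and pc: "SG_prefix_closed \<Sigma> \<Gamma> U"
begin

abbreviation "TT \<equiv> lconc U (lconc (lists \<Sigma>) (lists \<Gamma>))"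

lemma disj': "\<Gamma> \<inter> \<Sigma> = {}" using disj by blast

lemma fA: "finite (\<Sigma> \<union> \<Gamma>)" using fS fG by simp

lemma U_alt: "u \<in> U \<Longrightarrow> alt \<Sigma> \<Gamma> u \<and> even (length u)"
  using USG SG_alt by blast

lemma U_lists: "U \<subseteq> lists (\<Sigma> \<union> \<Gamma>)"
  using U_alt alt_lists by blast

lemma TT_mem: "w \<in> TT \<longleftrightarrow> (\<exists>u s g. w = u @ s @ g \<and> u \<in> U \<and> s \<in> lists \<Sigma> \<and> g \<in> lists \<Gamma>)"
  unfolding lconc_def by blast

lemma TT_lists: "TT \<subseteq> lists (\<Sigma> \<union> \<Gamma>)"
proof
  fix w assume "w \<in> TT"
  then obtain u s g where h: "w = u @ s @ g" "u \<in> U" "s \<in> lists \<Sigma>" "g \<in> lists \<Gamma>"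
    using TT_mem by blast
  have "u \<in> lists (\<Sigma> \<union> \<Gamma>)" using h(2) U_lists by blast
  then show "w \<in> lists (\<Sigma> \<union> \<Gamma>)" using h by auto
qed

lemma TT_reg: "regular TT"
  by (intro reg_conc regU regular_lists fS fG)

lemma pc_ext: "z \<in> lstar {[a, b] |a b. a \<in> \<Sigma> \<and> b \<in> \<Gamma>} \<Longrightarrow>
   x \<in> lstar {[a, b] |a b. a \<in> \<Sigma> \<and> b \<in> \<Gamma>} \<Longrightarrow> x @ z \<in> U \<Longrightarrow> x \<in> U"
proof (induction z arbitrary: x rule: lstar.induct)
  case lstar_Nil then show ?case by simp
next
  case (lstar_app u v)
  from lstar_app.hyps(1) obtain a b where ab: "u = [a, b]" "a \<in> \<Sigma>" "b \<in> \<Gamma>" by blast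
  have "[a, b] @ [] \<in> lstar {[a, b] |a b. a \<in> \<Sigma> \<and> b \<in> \<Gamma>}"
    using lstar_app.hyps(1) ab(1) by (intro lstar.lstar_app lstar.lstar_Nil) auto
  then have "x @ [a, b] \<in> lstar {[a, b] |a b. a \<in> \<Sigma> \<and> b \<in> \<Gamma>}"
    using lstar_append[OF lstar_app.prems(1)] by simp
  moreover have "(x @ [a, b]) @ v \<in> U" using lstar_app.prems(2) ab(1) by simp
  ultimately have "x @ [a, b] \<in> U" using lstar_app.IH by blast
  then show ?case using pc lstar_app.prems(1) ab unfolding SG_prefix_closed_def SG_words_def by blast
qed

lemma inf_nonempty: "infinite (lquot x U) \<Longrightarrow> \<exists>z. x @ z \<in> U"
  using infinite_imp_nonempty by fastforce

lemma inf_in_U: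
  assumes "infinite (lquot (u @ [a, b]) U)" "u \<in> U" "a \<in> \<Sigma>" "b \<in> \<Gamma>"
  shows "u @ [a, b] \<in> U"
proof -
  obtain z where z: "(u @ [a, b]) @ z \<in> U" using inf_nonempty[OF assms(1)] by blast
  have az: "alt \<Sigma> \<Gamma> ((u @ [a, b]) @ z) \<and> even (length ((u @ [a, b]) @ z))"
    using U_alt[OF z] .
  have au: "alt \<Sigma> \<Gamma> u" "even (length u)" using U_alt[OF assms(2)] by auto
  have "alt \<Sigma> \<Gamma> (u @ [a, b])" using au assms(3,4) by (simp add: alt_append)
  moreover have "even (length (u @ [a, b]))" using au by simp
  ultimately have "alt \<Sigma> \<Gamma> z" "even (length z)" using az by (auto simp: alt_append simp del: append_assoc)
  then have "z \<in> lstar {[a, b] |a b. a \<in> \<Sigma> \<and> b \<in> \<Gamma>}" using SG_alt2 by blast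
  moreover have "u @ [a, b] \<in> lstar {[a, b] |a b. a \<in> \<Sigma> \<and> b \<in> \<Gamma>}"
    using SG_alt2 \<open>alt \<Sigma> \<Gamma> (u @ [a, b])\<close> \<open>even (length (u @ [a, b]))\<close> by blast
  ultimately show ?thesis using pc_ext z by blast
qed

lemma inf_alt: "infinite (lquot x U) \<Longrightarrow> alt \<Sigma> \<Gamma> x"
proof -
  assume "infinite (lquot x U)"
  then obtain z where "x @ z \<in> U" using inf_nonempty by blast
  then have "alt \<Sigma> \<Gamma> (x @ z)" using U_alt by blast
  then show ?thesis by (simp add: alt_append)
qed

lemma inf_prefix: "infinite (lquot (x @ y) U) \<Longrightarrow> infinite (lquot x U)"
proof
  assume "infinite (lquot (x @ y) U)" "finite (lquot x U)"
  then have "finite (lquot y (lquot x U))" using finite_lquot by blast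
  then show False using \<open>infinite (lquot (x @ y) U)\<close> by (simp add: lquot_append)
qed

lemma F1: "finite (lquot x U) \<Longrightarrow> RegFS \<Sigma> (lquot x TT)"
proof -
  assume fin: "finite (lquot x U)"
  define M where "M = Max (length ` lquot x U)"
  have M: "length z \<le> M" if "z \<in> lquot x U" for z
    unfolding M_def using fin that by (intro Max_ge) auto
  have "\<forall>z\<in>lquot x TT. shift \<Sigma> z \<le> M + 1"
  proof
    fix z assume "z \<in> lquot x TT"
    then have "x @ z \<in> TT" by simp
    then obtain u s g where h: "x @ z = u @ (s @ g)" "u \<in> U" "s \<in> lists \<Sigma>" "g \<in> lists \<Gamma>"
      using TT_mem by auto
    have sg: "shift \<Sigma> (s @ g) \<le> 1" using shift_sg[OF disj h(3,4)] .
    from h(1) obtain us where "(x = u @ us \<and> us @ z = s @ g) \<or> (x @ us = u \<and> z = us @ (s @ g))"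
      by (auto simp: append_eq_append_conv2)
    then show "shift \<Sigma> z \<le> M + 1"
    proof
      assume a: "x = u @ us \<and> us @ z = s @ g"
      then have "z = drop (length us) (s @ g)" by (metis append_eq_conv_conj)
      then have "shift \<Sigma> z \<le> shift \<Sigma> (s @ g)" using shift_drop by metis
      then show ?thesis using sg by simp
    next
      assume a: "x @ us = u \<and> z = us @ (s @ g)"
      then have "us \<in> lquot x U" using h(2) by simp
      then have "length us \<le> M" using M by blast
      moreover have "shift \<Sigma> z \<le> length us + shift \<Sigma> (s @ g)" using a shift_app by metis
      ultimately show ?thesis using sg by simp
    qed
  qed
  moreover have "regular (lquot x TT)" using regular_lquot[OF fA TT_lists TT_reg] .
  ultimately show ?thesis unfolding RegFS_def by blast
qed

lemma F2: "infinite (lquot x U) \<Longrightarrow> \<not> RegFS \<Sigma> (lquot x TT)"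
proof
  assume inf: "infinite (lquot x U)" and "RegFS \<Sigma> (lquot x TT)"
  then obtain B where B: "\<forall>z\<in>lquot x TT. shift \<Sigma> z \<le> B" unfolding RegFS_def by blast
  have "lquot x U \<subseteq> {xs. set xs \<subseteq> \<Sigma> \<union> \<Gamma> \<and> length xs \<le> B + 1}"
  proof
    fix z assume z: "z \<in> lquot x U"
    then have xz: "x @ z \<in> U" by simp
    then have "(x @ z) @ [] @ [] \<in> TT" by (intro lconc_I) auto
    then have "shift \<Sigma> z \<le> B" using B by simp
    have a: "alt \<Sigma> \<Gamma> (x @ z)" using U_alt[OF xz] by blast
    have "shift \<Sigma> z = length z - 1 \<and> z \<in> lists (\<Sigma> \<union> \<Gamma>)"
    proof (cases "even (length x)")
      case True
      then have "alt \<Sigma> \<Gamma> z" using a by (simp add: alt_append)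
      then show ?thesis using shift_alt[OF _ disj, of z] alt_lists[of \<Sigma> \<Gamma> z] by simp
    next
      case False
      then have "alt \<Gamma> \<Sigma> z" using a by (simp add: alt_append)
      moreover have "\<Gamma> \<union> \<Sigma> = \<Sigma> \<union> \<Gamma>" by blast
      ultimately show ?thesis using shift_alt[OF _ disj', of z] alt_lists[of \<Gamma> \<Sigma> z] by simp
    qed
    then show "z \<in> {xs. set xs \<subseteq> \<Sigma> \<union> \<Gamma> \<and> length xs \<le> B + 1}"
      using \<open>shift \<Sigma> z \<le> B\<close> by auto
  qed
  then have "finite (lquot x U)" using finite_lists_length_le[OF fA] finite_subset by blast
  then show False using inf by simp
qed

lemma F3:
  assumes "u \<in> U" "a \<in> \<Sigma>" "c \<in> \<Sigma>"
  shows "RegFS \<Sigma> (lquot (u @ [a, c]) TT)"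
proof -
  have "\<forall>z\<in>lquot (u @ [a, c]) TT. shift \<Sigma> z \<le> 1"
  proof
    fix z assume "z \<in> lquot (u @ [a, c]) TT"
    then have "(u @ [a, c]) @ z \<in> TT" by (simp only: lquot_mem)
    then obtain u' s g where h: "(u @ [a, c]) @ z = u' @ (s @ g)" "u' \<in> U" "s \<in> lists \<Sigma>" "g \<in> lists \<Gamma>"
      using TT_mem by blast
    have sg: "shift \<Sigma> (s @ g) \<le> 1" using shift_sg[OF disj h(3,4)] .
    from h(1) obtain us where "(u @ [a, c] = u' @ us \<and> us @ z = s @ g) \<or> ((u @ [a, c]) @ us = u' \<and> z = us @ (s @ g))"
      unfolding append_eq_append_conv2 by blast
    then show "shift \<Sigma> z \<le> 1"
    proof
      assume a: "u @ [a, c] = u' @ us \<and> us @ z = s @ g"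
      then have "z = drop (length us) (s @ g)" by (metis append_eq_conv_conj)
      then have "shift \<Sigma> z \<le> shift \<Sigma> (s @ g)" using shift_drop by metis
      then show ?thesis using sg by simp
    next
      assume a: "(u @ [a, c]) @ us = u' \<and> z = us @ (s @ g)"
      then have "alt \<Sigma> \<Gamma> ((u @ [a, c]) @ us)" using U_alt h(2) by blast
      then have "alt \<Sigma> \<Gamma> (u @ [a, c])" by (simp only: alt_append) blast
      moreover have "even (length u)" using U_alt assms(1) by blast
      ultimately have "c \<in> \<Gamma>" by (simp add: alt_append)
      then show ?thesis using assms(3) disj by blast
    qed
  qed
  moreover have "regular (lquot (u @ [a, c]) TT)" using regular_lquot[OF fA TT_lists TT_reg] .
  ultimately show ?thesis unfolding RegFS_def by blast
qed

end


context setting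
begin

lemma fsS: "s \<in> lists \<Sigma> \<Longrightarrow> proj_i \<Gamma> s = s \<and> proj_o \<Sigma> s = []"
  using filt_S[OF _ disj] unfolding proj_i_def proj_o_def by blast

lemma fsG: "g \<in> lists \<Gamma> \<Longrightarrow> proj_i \<Gamma> g = [] \<and> proj_o \<Sigma> g = g"
  using filt_G[OF _ disj] unfolding proj_i_def proj_o_def by blast

lemma proj_app: "proj_i \<Gamma> (x @ y) = proj_i \<Gamma> x @ proj_i \<Gamma> y" "proj_o \<Sigma> (x @ y) = proj_o \<Sigma> x @ proj_o \<Sigma> y"
  by (simp_all add: proj_i_def proj_o_def)

lemma proj_S: "a \<in> \<Sigma> \<Longrightarrow> proj_i \<Gamma> [a] = [a] \<and> proj_o \<Sigma> [a] = []"
  using disj by (auto simp: proj_i_def proj_o_def)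

lemma proj_G: "b \<in> \<Gamma> \<Longrightarrow> proj_i \<Gamma> [b] = [] \<and> proj_o \<Sigma> [b] = [b]"
  using disj by (auto simp: proj_i_def proj_o_def)

lemma M1: "w \<in> maxsync \<Sigma> \<Gamma> TT \<Longrightarrow> w \<notin> BAD \<Sigma> \<Gamma> U"
proof
  assume w: "w \<in> maxsync \<Sigma> \<Gamma> TT" and "w \<in> BAD \<Sigma> \<Gamma> U"
  then obtain u a b c s g where h: "w = u @ a # c # s @ b # g" "u \<in> U" "a \<in> \<Sigma>" "b \<in> \<Gamma>"
    "c \<in> \<Sigma>" "s \<in> lists \<Sigma>" "g \<in> lists \<Gamma>" "infinite (lquot (u @ [a, b]) U)"
    unfolding BAD_mem by blast
  define w' where "w' = (u @ [a, b]) @ (c # s) @ g"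
  have uab: "u @ [a, b] \<in> U" using inf_in_U h(8,2,3,4) .
  have w'T: "w' \<in> TT" unfolding w'_def using uab h(5,6,7) by (intro lconc_I) auto
  have e1: "w = u @ [a] @ [c] @ s @ [b] @ g" using h(1) by simp
  have e2: "w' = u @ [a] @ [b] @ [c] @ s @ g" unfolding w'_def by simp
  have sem: "sem \<Sigma> \<Gamma> w' = sem \<Sigma> \<Gamma> w"
    unfolding sem_def e1 e2 proj_app using fsS[OF h(6)] fsG[OF h(7)] proj_S[OF h(3)] proj_S[OF h(5)]
      proj_G[OF h(4)] by simp
  from w have "sync_le \<Sigma> \<Gamma> TT w' w" unfolding maxsync_def using w'T sem by blast
  moreover have len: "length u + 2 \<le> length w'" by (simp add: w'_def)
  ultimately have imp: "RegFS \<Sigma> (lquot (take (length u + 2) w) TT) \<longrightarrow> RegFS \<Sigma> (lquot (take (length u + 2) w') TT)"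
    unfolding sync_le_def by blast
  have t1: "take (length u + 2) w = u @ [a, c]" by (simp add: h(1))
  have t2: "take (length u + 2) w' = u @ [a, b]" by (simp add: w'_def)
  show False using imp F3[OF h(2,3,5)] F2[OF h(8)] unfolding t1 t2 by blast
qed

lemma CORE:
  assumes wT: "w \<in> TT" and nb: "w \<notin> BAD \<Sigma> \<Gamma> U" and w'T: "w' \<in> TT"
    and sem: "sem \<Sigma> \<Gamma> w' = sem \<Sigma> \<Gamma> w" and i: "i \<le> length w'"
    and inf: "infinite (lquot (take i w') U)"
  shows "take i w = take i w'"
proof -
  obtain u s g where w: "w = u @ s @ g" "u \<in> U" "s \<in> lists \<Sigma>" "g \<in> lists \<Gamma>"
    using wT TT_mem by blast
  have pi: "proj_i \<Gamma> w' = proj_i \<Gamma> w" "proj_o \<Sigma> w' = proj_o \<Sigma> w" using sem by (auto simp: sem_def)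
  have "w \<in> lists (\<Sigma> \<union> \<Gamma>)" "w' \<in> lists (\<Sigma> \<union> \<Gamma>)" using TT_lists wT w'T by blast+
  then have lw: "length w = length w'"
    using len_proj[OF _ disj, of w] len_proj[OF _ disj, of w'] pi by simp
  define x' where "x' = take i w'"
  have ax': "alt \<Sigma> \<Gamma> x'" using inf_alt inf x'_def by simp
  have lx': "length x' = i" using i x'_def by simp
  have "pre (proj_i \<Gamma> x') (proj_i \<Gamma> w')" unfolding x'_def proj_i_def by (rule pre_filter_take)
  moreover have "pre (proj_o \<Sigma> x') (proj_o \<Sigma> w')" unfolding x'_def proj_o_def by (rule pre_filter_take)
  ultimately have px': "pre (proj_i \<Gamma> x') (proj_i \<Gamma> w)" "pre (proj_o \<Sigma> x') (proj_o \<Sigma> w)"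
    using pi by simp_all
  have ua: "alt \<Sigma> \<Gamma> u" "even (length u)" using U_alt w(2) by auto
  obtain n where n: "length u = 2 * n" using ua(2) by (auto elim: evenE)
  have plu: "length (proj_i \<Gamma> u) = n" "length (proj_o \<Sigma> u) = n"
    using alt_len[OF ua(1) disj] n unfolding proj_i_def proj_o_def by auto
  have al: "proj_i \<Gamma> w = proj_i \<Gamma> u @ s" "proj_o \<Sigma> w = proj_o \<Sigma> u @ g"
    unfolding w(1) proj_app using fsS[OF w(3)] fsG[OF w(4)] by simp_all
  have lpx': "length (proj_i \<Gamma> x') = (i + 1) div 2" "length (proj_o \<Sigma> x') = i div 2"
    using alt_len[OF ax' disj] lx' unfolding proj_i_def proj_o_def by auto
  have li: "(i + 1) div 2 \<le> n + length s" using pre_len[OF px'(1)] lpx'(1) al(1) plu(1) by simp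
  have lo: "i div 2 \<le> n + length g" using pre_len[OF px'(2)] lpx'(2) al(2) plu(2) by simp
  have altw: "alt \<Sigma> \<Gamma> (take i w)"
  proof (cases "i \<le> length u")
    case True
    then have "take i w = take i u" by (simp add: w(1))
    then show ?thesis using alt_take[OF ua(1)] by simp
  next
    case False
    have "s \<noteq> []"
    proof
      assume "s = []"
      then have "(i + 1) div 2 \<le> n" using li by simp
      then show False using False n by presburger
    qed
    then obtain c1 s1 where s: "s = c1 # s1" by (cases s) auto
    have c1: "c1 \<in> \<Sigma>" "s1 \<in> lists \<Sigma>" using w(3) s by auto
    show ?thesis
    proof (cases "i = length u + 1")
      case True
      then have "take i w = u @ [c1]" by (simp add: w(1) s)
      then show ?thesis using ua c1 by (simp add: alt_append)
    next
      case False2: False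
      then have i2: "length u + 2 \<le> i" using False by simp
      have "g \<noteq> []"
      proof
        assume "g = []"
        then have "i div 2 \<le> n" using lo by simp
        then show False using i2 n by presburger
      qed
      then obtain b1 g1 where g: "g = b1 # g1" by (cases g) auto
      have b1: "b1 \<in> \<Gamma>" "g1 \<in> lists \<Gamma>" using w(4) g by auto
      define y where "y = take (length u + 2) x'"
      have "x' = y @ drop (length u + 2) x'" by (simp add: y_def)
      then have yinf: "infinite (lquot y U)" using inf_prefix inf x'_def by metis
      have ya: "alt \<Sigma> \<Gamma> y" using alt_take[OF ax'] y_def by simp
      have ly: "length y = length u + 2" using lx' i2 y_def by simp
      have a2: "alt \<Sigma> \<Gamma> (u @ [c1, b1])" using ua c1 b1 by (simp add: alt_append)
      have "pre (proj_i \<Gamma> y) (proj_i \<Gamma> x')" unfolding y_def proj_i_def by (rule pre_filter_take)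
      then have p1: "pre (proj_i \<Gamma> y) (proj_i \<Gamma> w)" using px'(1) pre_trans by blast
      have "pre (proj_o \<Sigma> y) (proj_o \<Sigma> x')" unfolding y_def proj_o_def by (rule pre_filter_take)
      then have p2: "pre (proj_o \<Sigma> y) (proj_o \<Sigma> w)" using px'(2) pre_trans by blast
      have e: "u @ [c1, b1] = u @ [c1] @ [b1]" by simp
      have p3: "pre (proj_i \<Gamma> (u @ [c1, b1])) (proj_i \<Gamma> w)"
        unfolding al(1) e proj_app using proj_S[OF c1(1)] proj_G[OF b1(1)]
        by (simp add: s pre_app pre_Cons)
      have p4: "pre (proj_o \<Sigma> (u @ [c1, b1])) (proj_o \<Sigma> w)"
        unfolding al(2) e proj_app using proj_S[OF c1(1)] proj_G[OF b1(1)]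
        by (simp add: g pre_app pre_Cons)
      have "y = u @ [c1, b1]"
        using alt_eq_pre[OF ya a2 disj _ _ _ _ _, of "proj_i \<Gamma> w" "proj_o \<Sigma> w"] ly p1 p2 p3 p4
        unfolding proj_i_def proj_o_def by simp
      then have infu: "infinite (lquot (u @ [c1, b1]) U)" using yinf by simp
      have "s1 = []"
      proof (rule ccontr)
        assume "s1 \<noteq> []"
        then obtain c2 s2 where s1: "s1 = c2 # s2" by (cases s1) auto
        have "w = u @ c1 # c2 # s2 @ b1 # g1" by (simp add: w(1) s s1 g)
        moreover have "c2 \<in> \<Sigma>" "s2 \<in> lists \<Sigma>" using c1(2) s1 by auto
        ultimately have "w \<in> BAD \<Sigma> \<Gamma> U" unfolding BAD_mem using w(2) c1 b1 infu by blast
        then show False using nb by simp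
      qed
      show ?thesis
      proof (cases "i = length u + 2")
        case True
        then have "take i w = u @ [c1, b1]" by (simp add: w(1) s g \<open>s1 = []\<close>)
        then show ?thesis using a2 by simp
      next
        case False
        then have "length u + 3 \<le> i" using i2 by simp
        moreover have "(i + 1) div 2 \<le> n + 1" using li s \<open>s1 = []\<close> by simp
        ultimately show ?thesis using n by presburger
      qed
    qed
  qed
  have ltw: "length (take i w) = length x'" using lw i lx' by simp
  have "pre (proj_i \<Gamma> (take i w)) (proj_i \<Gamma> w)" unfolding proj_i_def by (rule pre_filter_take)
  moreover have "pre (proj_o \<Sigma> (take i w)) (proj_o \<Sigma> w)" unfolding proj_o_def by (rule pre_filter_take)
  ultimately have "take i w = x'"
    using alt_eq_pre[OF altw ax' disj ltw, of "proj_i \<Gamma> w" "proj_o \<Sigma> w"] px'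
    unfolding proj_i_def proj_o_def by simp
  then show ?thesis by (simp add: x'_def)
qed

lemma M2:
  assumes wT: "w \<in> TT" and nb: "w \<notin> BAD \<Sigma> \<Gamma> U"
  shows "w \<in> maxsync \<Sigma> \<Gamma> TT"
  unfolding maxsync_def
proof (intro CollectI conjI ballI impI wT)
  fix w' assume w'T: "w' \<in> TT" and sem: "sem \<Sigma> \<Gamma> w' = sem \<Sigma> \<Gamma> w"
  show "sync_le \<Sigma> \<Gamma> TT w' w"
    unfolding sync_le_def
  proof (intro conjI allI impI w'T wT sem)
    fix i assume i: "i \<le> length w'" and r: "RegFS \<Sigma> (lquot (take i w) TT)"
    show "RegFS \<Sigma> (lquot (take i w') TT)"
    proof (rule ccontr)
      assume nr: "\<not> RegFS \<Sigma> (lquot (take i w') TT)"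
      then have "infinite (lquot (take i w') U)" using F1 by blast
      then have "take i w = take i w'" using CORE[OF wT nb w'T sem i] by blast
      then show False using r nr by simp
    qed
  qed
qed

lemma G_reg: "regular (G U a b)"
proof (rule regular_by_quot[OF fA _ regU, of _ "\<lambda>Q. {u \<in> Q. infinite (lquot (u @ [a, b]) Q)}"])
  show "G U a b \<subseteq> lists (\<Sigma> \<union> \<Gamma>)" using U_lists by (auto simp: G_def)
  fix y
  show "lquot y (G U a b) = {u \<in> lquot y U. infinite (lquot (u @ [a, b]) (lquot y U))}"
    by (auto simp: G_def lquot_def)
qed

lemma BAD_reg: "regular (BAD \<Sigma> \<Gamma> U)"
  unfolding BAD_def
  by (intro regular_UN finite_cartesian_product fS fG reg_conc G_reg reg_letter regular_lists)

lemma final: "regular (maxsync \<Sigma> \<Gamma> TT)"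
proof -
  have "maxsync \<Sigma> \<Gamma> TT = TT - BAD \<Sigma> \<Gamma> U"
  proof (intro equalityI subsetI)
    fix w assume "w \<in> maxsync \<Sigma> \<Gamma> TT"
    then show "w \<in> TT - BAD \<Sigma> \<Gamma> U" using M1 unfolding maxsync_def by blast
  next
    fix w assume "w \<in> TT - BAD \<Sigma> \<Gamma> U"
    then show "w \<in> maxsync \<Sigma> \<Gamma> TT" using M2 by blast
  qed
  then show ?thesis using regular_diff[OF fA TT_lists TT_reg BAD_reg] by simp
qed

end

theorem mainTheorem19:
  fixes \<Sigma> \<Gamma> :: "'a set" and U :: "'a list set"
  assumes "finite \<Sigma>" and "finite \<Gamma>" and "\<Sigma> \<inter> \<Gamma> = {}"
    and "U \<subseteq> SG_words \<Sigma> \<Gamma>"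
    and "regular U"
    and "SG_prefix_closed \<Sigma> \<Gamma> U"
  shows "regular (maxsync \<Sigma> \<Gamma> (lconc U (lconc (lists \<Sigma>) (lists \<Gamma>))))"
proof -
  interpret setting \<Sigma> \<Gamma> U using assms by (unfold_locales)
  show ?thesis using final .
qed

end
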